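(* Let $q:=\frac{y_0^2(1-\beta)^2}{\nu^2x_0^{2(1-\beta)}}$. (i) If $q>1$, or $q=1$ and $\frac23\le\beta<1$, then the sequence $(\mathbb{P}_\infty^{(n)})_{n\ge0}$ diverges. (ii) If $q<1$, or $q=1$ and $0\le\beta<\frac23$, then as $n\to\infty$, $$\mathbb{P}_\infty=\mathbb{P}_\infty^{(n)}+\mathcal{O}\!\left(n^{-1+\frac{\beta}{2-2\beta}}\exp\!\big(-n\log(1/q)\big)\right).$$
   Context: Parameters $x_0,y_0,\nu>0$, $\beta\in[0,1)$. $\Gamma(v,x):=\Gamma(v)^{-1}\int_0^xu^{v-1}e^{-u}\,\mathrm{d}u$. $\mathbb{P}_\infty:=\frac{y_0}{\nu\sqrt{2\pi}}\int_0^\infty\left[1-\Gamma\!\left(\frac{1}{2(1-\beta)},\frac{x_0^{2(1-\beta)}}{2r(1-\beta)^2}\right)\right]r^{-3/2}\exp\!\left(-\frac{y_0^2}{2\nu^2r}\right)\mathrm{d}r$ (the large-time mass at zero of the uncorrelated SABR model), and for $n\ge0$, $\mathbb{P}_\infty^{(n)}:=\int_0^\infty\left[1-\Gamma\!\left(\frac{1}{2(1-\beta)},\frac{x_0^{2(1-\beta)}}{2r(1-\beta)^2}\right)\right]\frac{y_0}{\nu r^{3/2}\sqrt{2\pi}}\sum_{k=0}^n\frac{1}{k!}\left(-\frac{y_0^2}{2\nu^2r}\right)^k\mathrm{d}r$, equivalently $\mathbb{P}_\infty^{(n)}=\sum_{k=0}^n(-1)^kb_k$ with $b_k:=\frac{2y_0(1-\beta)}{\Gamma(\frac{1}{2(1-\beta)})\nu\sqrt{\pi}x_0^{1-\beta}}q^k\frac{\Gamma(k+1+\frac{\beta}{2-2\beta})}{k!(1+2k)}$.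 *)

theory Defs
  imports "HOL-Analysis.Analysis" "HOL-Library.Landau_Symbols"
begin

definition reg_lower_gamma :: "real \<Rightarrow> real \<Rightarrow> real" where
  "reg_lower_gamma v x = (LBINT u:{0..x}. u powr (v - 1) * exp (- u)) / Gamma v"

definition sabr_tail :: "real \<Rightarrow> real \<Rightarrow> real \<Rightarrow> real" where
  "sabr_tail x0 \<beta> r =
     1 - reg_lower_gamma (1 / (2 * (1 - \<beta>))) (x0 powr (2 * (1 - \<beta>)) / (2 * r * (1 - \<beta>)\<^sup>2))"

definition P_inf :: "real \<Rightarrow> real \<Rightarrow> real \<Rightarrow> real \<Rightarrow> real" where
  "P_inf x0 y0 \<nu> \<beta> =
     y0 / (\<nu> * sqrt (2 * pi)) *
     (LBINT r:{0<..}. sabr_tail x0 \<beta> r * r powr (-3/2) * exp (- (y0\<^sup>2 / (2 * \<nu>\<^sup>2 * r))))"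

definition P_inf_n :: "real \<Rightarrow> real \<Rightarrow> real \<Rightarrow> real \<Rightarrow> nat \<Rightarrow> real" where
  "P_inf_n x0 y0 \<nu> \<beta> n =
     (LBINT r:{0<..}. sabr_tail x0 \<beta> r * (y0 / (\<nu> * r powr (3/2) * sqrt (2 * pi))) *
        (\<Sum>k\<le>n. (1 / fact k) * (- (y0\<^sup>2 / (2 * \<nu>\<^sup>2 * r))) ^ k))"

end

theory Submission
  imports Defs "HOL-Real_Asymp.Real_Asymp"
begin

definition gi :: "real \<Rightarrow> real \<Rightarrow> real" where "gi v u = u powr (v-1) * exp (-u)"

lemma gi_nonneg: "0 \<le> gi v u" by (simp add: gi_def)

lemma gi_meas[measurable]: "gi v \<in> borel_measurable lborel"
  unfolding gi_def by measurable

lemma nn_to_set_integral: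
  fixes f :: "real \<Rightarrow> real"
  assumes [measurable]: "f \<in> borel_measurable lborel" "S \<in> sets lborel"
    and nn: "\<And>x. x \<in> S \<Longrightarrow> 0 \<le> f x" and V: "0 \<le> V"
    and eq: "(\<integral>\<^sup>+x. indicator S x * ennreal (f x) \<partial>lborel) = ennreal V"
  shows "set_integrable lborel S f \<and> (LBINT x:S. f x) = V"
proof -
  have e: "(\<integral>\<^sup>+x. ennreal (indicator S x * f x) \<partial>lborel) = ennreal V"
    using eq by (intro trans[OF nn_integral_cong eq]) (auto simp: indicator_def)
  have i: "integrable lborel (\<lambda>x. indicator S x * f x)"
    by (rule integrableI_nn_integral_finite[OF _ _ e]) (auto simp: indicator_def nn)
  have "ennreal (integral\<^sup>L lborel (\<lambda>x. indicator S x * f x)) = ennreal V"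
    using nn_integral_eq_integral[OF i] e by (auto simp: indicator_def nn)
  moreover have "0 \<le> integral\<^sup>L lborel (\<lambda>x. indicator S x * f x)"
    by (intro integral_nonneg_AE) (auto simp: indicator_def nn)
  ultimately have "integral\<^sup>L lborel (\<lambda>x. indicator S x * f x) = V" using V by simp
  with i show ?thesis unfolding set_integrable_def set_lebesgue_integral_def by simp
qed

lemma set_integral_to_nn:
  fixes f :: "real \<Rightarrow> real"
  assumes "set_integrable lborel S f" "\<And>x. x \<in> S \<Longrightarrow> 0 \<le> f x"
  shows "(\<integral>\<^sup>+x. indicator S x * ennreal (f x) \<partial>lborel) = ennreal (LBINT x:S. f x)"
proof -
  have "(\<integral>\<^sup>+x. indicator S x * ennreal (f x) \<partial>lborel) = (\<integral>\<^sup>+x. ennreal (indicator S x *\<^sub>R f x) \<partial>lborel)"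
    by (intro nn_integral_cong) (auto simp: indicator_def)
  also have "\<dots> = ennreal (LBINT x:S. f x)"
    using assms unfolding set_integrable_def set_lebesgue_integral_def
    by (intro nn_integral_eq_integral) (auto simp: indicator_def)
  finally show ?thesis .
qed

lemma gamma_set: assumes "v > 0"
  shows "set_integrable lborel {0..} (gi v) \<and> (LBINT u:{0..}. gi v u) = Gamma v"
proof (rule nn_to_set_integral)
  show "0 \<le> Gamma v" using assms by (simp add: Gamma_real_pos less_imp_le)
  have "ennreal (Gamma v) = (\<integral>\<^sup>+t. ennreal (indicator {0..} t * t powr (v - 1) / exp t) \<partial>lborel)"
    using Gamma_conv_nn_integral_real[OF assms] by simp
  also have "\<dots> = (\<integral>\<^sup>+x. indicator {0..} x * ennreal (gi v x) \<partial>lborel)"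
    by (intro nn_integral_cong) (auto simp: indicator_def gi_def exp_minus field_simps)
  finally show "(\<integral>\<^sup>+x. indicator {0..} x * ennreal (gi v x) \<partial>lborel) = ennreal (Gamma v)" ..
qed (auto simp: gi_nonneg)

lemma upper_gamma:
  assumes "v > 0" "x \<ge> 0"
  shows "set_integrable lborel {x<..} (gi v)"
    and "Gamma v * (1 - reg_lower_gamma v x) = (LBINT u:{x<..}. gi v u)"
proof -
  note G = gamma_set[OF assms(1)]
  show i1: "set_integrable lborel {x<..} (gi v)"
    by (rule set_integrable_subset[OF conjunct1[OF G]]) (use assms in auto)
  have i2: "set_integrable lborel {0..x} (gi v)"
    by (rule set_integrable_subset[OF conjunct1[OF G]]) (use assms in auto)
  have u: "{0..x} \<union> {x<..} = {0..}" using assms by auto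
  have "Gamma v = (LBINT u:{0..x}. gi v u) + (LBINT u:{x<..}. gi v u)"
  proof -
    have d: "{0..x} \<inter> {x<..} = {}" by auto
    show ?thesis using set_integral_Un[OF d i2 i1] G u by simp
  qed
  moreover have "Gamma v \<noteq> 0" using Gamma_real_pos[OF assms(1)] by simp
  ultimately show "Gamma v * (1 - reg_lower_gamma v x) = (LBINT u:{x<..}. gi v u)"
    unfolding reg_lower_gamma_def gi_def[symmetric] by (simp add: field_simps)
qed

lemma powr_tail:
  assumes "b > 0" "p > 1"
  shows "(\<integral>\<^sup>+r. indicator {b<..} r * ennreal (r powr (-p)) \<partial>lborel) = ennreal (b powr (1-p)/(p-1))"
proof -
  have h: "((\<lambda>x. x powr (-p)) has_integral b powr (1-p)/(p-1)) {b..}"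
  proof -
    have "- (b powr (1 - p) / (1 - p)) = b powr (1-p)/(p-1)" using assms by (simp add: field_simps)
    thus ?thesis using has_integral_powr_to_inf[of "-p" b] assms by simp
  qed
  have "(\<integral>\<^sup>+r. indicator {b<..} r * ennreal (r powr (-p)) \<partial>lborel)
       = (\<integral>\<^sup>+r. ennreal (indicator {b..} r * r powr (-p)) \<partial>lborel)"
    by (intro nn_integral_cong_AE eventually_mono[OF AE_lborel_singleton[of b]])
       (auto simp: indicator_def)
  also have "\<dots> = ennreal (b powr (1-p)/(p-1))"
    by (rule nn_integral_has_integral_lebesgue[OF _ h]) simp
  finally show ?thesis .
qed

definition TT :: "real \<Rightarrow> real \<Rightarrow> real \<Rightarrow> real" where
  "TT v A r = 1 - reg_lower_gamma v (A / r)"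

lemma set_int_nonneg: fixes f :: "real \<Rightarrow> real"
  shows "(\<And>x. x \<in> S \<Longrightarrow> 0 \<le> f x) \<Longrightarrow> 0 \<le> (LBINT x:S. f x)"
  unfolding set_lebesgue_integral_def
  by (intro integral_nonneg_AE) (auto simp: indicator_def)

lemma aux_m: "(\<lambda>(r,u). indicator {0..A/r} u *\<^sub>R (u powr (v-1) * exp (-u)) :: real) \<in> borel_measurable (borel \<Otimes>\<^sub>M lborel)"
proof -
  have "(\<lambda>(r,u). (if 0 \<le> u \<and> u \<le> A/r then 1 else 0) * (u powr (v-1) * exp (-u)) :: real) \<in> borel_measurable (borel \<Otimes>\<^sub>M borel)"
    by measurable
  hence "(\<lambda>(r,u). (if 0 \<le> u \<and> u \<le> A/r then 1 else 0) * (u powr (v-1) * exp (-u)) :: real) \<in> borel_measurable (borel \<Otimes>\<^sub>M lborel)"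
    by (subst measurable_cong_sets[OF sets_pair_measure_cong[OF refl sets_lborel] refl])
  thus ?thesis by (simp add: indicator_def case_prod_unfold cong: if_cong)
qed

lemma lg_meas: "(\<lambda>r. LBINT u:{0..(A::real)/r}. u powr (v-1) * exp (-u)) \<in> borel_measurable borel"
  unfolding set_lebesgue_integral_def
  using lborel.borel_measurable_lebesgue_integral[OF aux_m[of A v]] by (simp add: case_prod_unfold)

lemma TT_meas[measurable]: "(\<lambda>r. TT v A r) \<in> borel_measurable lborel"
proof -
  have "(\<lambda>r. 1 - (LBINT u:{0..(A::real)/r}. u powr (v-1) * exp (-u)) / Gamma v) \<in> borel_measurable borel"
    using lg_meas[of A v] by measurable
  thus ?thesis unfolding TT_def reg_lower_gamma_def by simp
qed

lemma TT_eq: assumes "v > 0" "A > 0" "r > 0"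
  shows "TT v A r = (LBINT u:{A/r<..}. gi v u) / Gamma v"
proof -
  have "Gamma v > 0" using Gamma_real_pos[of v] assms by simp
  have "(LBINT u:{A/r<..}. gi v u) = Gamma v * (1 - reg_lower_gamma v (A / r))"
    using upper_gamma(2)[of v "A/r"] assms by simp
  thus ?thesis using \<open>Gamma v > 0\<close> unfolding TT_def by simp
qed

lemma TT_nonneg: assumes "v > 0" "A > 0" "r > 0" shows "TT v A r \<ge> 0"
  using TT_eq[OF assms] Gamma_real_pos[of v] assms
  by (auto intro!: divide_nonneg_pos set_int_nonneg simp: gi_nonneg)

lemma TT_le1: assumes "v > 0" "A > 0" "r > 0" shows "TT v A r \<le> 1"
proof -
  have "(LBINT u:{0..A/r}. u powr (v-1) * exp (-u)) \<ge> 0"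
    by (intro set_int_nonneg) auto
  thus ?thesis unfolding TT_def reg_lower_gamma_def using Gamma_real_pos[of v] assms by auto
qed

lemma key_nn:
  assumes v: "v > 0" and A: "A > 0" and p: "p > 1"
  shows "(\<integral>\<^sup>+r. indicator {0<..} r * ennreal (TT v A r * r powr (-p)) \<partial>lborel)
       = ennreal (Gamma (v+p-1) / (Gamma v * (p-1) * A powr (p-1)))"
proof -
  define F where "F = (\<lambda>r u. indicator {0<..} r * indicator {A/r<..} u * ennreal (gi v u * r powr (-p)))"
  have Fm: "case_prod F \<in> borel_measurable (lborel \<Otimes>\<^sub>M lborel)"
  proof -
    have "(\<lambda>(r,u). indicator {0<..} r * (if A/r < u then 1 else 0) * ennreal (u powr (v-1) * exp (-u) * r powr (-p))) \<in> borel_measurable (borel \<Otimes>\<^sub>M borel)"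
      by measurable
    hence "(\<lambda>(r,u). indicator {0<..} r * (if A/r < u then 1 else 0) * ennreal (u powr (v-1) * exp (-u) * r powr (-p))) \<in> borel_measurable (lborel \<Otimes>\<^sub>M lborel)"
      by (subst measurable_cong_sets[OF sets_pair_measure_cong[OF sets_lborel sets_lborel] refl])
    thus ?thesis unfolding F_def gi_def by (simp add: indicator_def case_prod_unfold cong: if_cong)
  qed
  have G: "Gamma v > 0" using Gamma_real_pos[OF v] .
  have "(\<integral>\<^sup>+r. indicator {0<..} r * ennreal (TT v A r * r powr (-p)) \<partial>lborel)
     = (\<integral>\<^sup>+r. ennreal (1 / Gamma v) * (\<integral>\<^sup>+u. F r u \<partial>lborel) \<partial>lborel)"
  proof (intro nn_integral_cong)
    fix r :: real
    show "indicator {0<..} r * ennreal (TT v A r * r powr (-p)) = ennreal (1 / Gamma v) * (\<integral>\<^sup>+u. F r u \<partial>lborel)"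
    proof (cases "r > 0")
      case True
      have "(\<integral>\<^sup>+u. F r u \<partial>lborel) = (\<integral>\<^sup>+u. ennreal (r powr (-p)) * (indicator {A/r<..} u * ennreal (gi v u)) \<partial>lborel)"
        unfolding F_def using True
        by (intro nn_integral_cong) (auto simp: indicator_def ennreal_mult gi_nonneg mult.commute)
      also have "\<dots> = ennreal (r powr (-p)) * (\<integral>\<^sup>+u. indicator {A/r<..} u * ennreal (gi v u) \<partial>lborel)"
        by (rule nn_integral_cmult) simp
      also have "\<dots> = ennreal (r powr (-p)) * ennreal (LBINT u:{A/r<..}. gi v u)"
        using set_integral_to_nn[OF upper_gamma(1)[of v "A/r"]] v A True by (simp add: gi_nonneg)
      finally have "(\<integral>\<^sup>+u. F r u \<partial>lborel) = ennreal (r powr (-p)) * ennreal (LBINT u:{A/r<..}. gi v u)" .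
      moreover have "(LBINT u:{A/r<..}. gi v u) \<ge> 0"
        by (intro set_int_nonneg) (simp add: gi_nonneg)
      ultimately show ?thesis using True TT_eq[OF v A True] G
        by (simp add: ennreal_mult'[symmetric] ennreal_mult[symmetric] mult_ac)
    next
      case False
      thus ?thesis unfolding F_def by simp
    qed
  qed
  also have "\<dots> = ennreal (1 / Gamma v) * (\<integral>\<^sup>+r. \<integral>\<^sup>+u. F r u \<partial>lborel \<partial>lborel)"
    by (rule nn_integral_cmult) (use Fm in measurable)
  also have "(\<integral>\<^sup>+r. \<integral>\<^sup>+u. F r u \<partial>lborel \<partial>lborel) = (\<integral>\<^sup>+u. \<integral>\<^sup>+r. F r u \<partial>lborel \<partial>lborel)"
    by (rule lborel_pair.Fubini'[OF Fm, symmetric])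
  also have "\<dots> = (\<integral>\<^sup>+u. ennreal (A powr (1-p) / (p-1)) * (indicator {0..} u * ennreal (gi (v+p-1) u)) \<partial>lborel)"
  proof (intro nn_integral_cong)
    fix u :: real
    show "(\<integral>\<^sup>+r. F r u \<partial>lborel) = ennreal (A powr (1-p) / (p-1)) * (indicator {0..} u * ennreal (gi (v+p-1) u))"
    proof (cases "u > 0")
      case True
      have "(\<integral>\<^sup>+r. F r u \<partial>lborel) = (\<integral>\<^sup>+r. ennreal (gi v u) * (indicator {A/u<..} r * ennreal (r powr (-p))) \<partial>lborel)"
        unfolding F_def
      proof (intro nn_integral_cong)
        fix r :: real
        have "(0 < r \<and> A / r < u) \<longleftrightarrow> A / u < r"
        proof
          assume "0 < r \<and> A / r < u" thus "A/u < r" using True by (auto simp: field_simps)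
        next
          assume h: "A / u < r"
          have "0 < A/u" using A True by simp
          hence "r > 0" using h by linarith
          thus "0 < r \<and> A / r < u" using h True by (auto simp: field_simps)
        qed
        thus "indicator {0<..} r * indicator {A / r<..} u * ennreal (gi v u * r powr - p) =
            ennreal (gi v u) * (indicator {A / u<..} r * ennreal (r powr - p))"
          by (auto simp: indicator_def ennreal_mult' gi_nonneg)
      qed
      also have "\<dots> = ennreal (gi v u) * ennreal ((A/u) powr (1-p)/(p-1))"
        by (subst nn_integral_cmult) (use powr_tail[of "A/u" p] A True p in auto)
      also have "\<dots> = ennreal (A powr (1-p) / (p-1)) * (indicator {0..} u * ennreal (gi (v+p-1) u))"
      proof -
        have "gi v u * ((A/u) powr (1-p)/(p-1)) = A powr (1-p) / (p-1) * gi (v+p-1) u"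
          using True A p unfolding gi_def
          by (simp add: powr_divide powr_diff powr_add powr_minus field_simps power2_eq_square)
        thus ?thesis using True p A by (simp add: ennreal_mult'[symmetric] gi_nonneg)
      qed
      finally show ?thesis .
    next
      case False
      have "F r u = 0" for r
      proof (cases "r > 0")
        case True
        hence "A / r > 0" using A by simp
        thus ?thesis using False unfolding F_def by (auto simp: indicator_def)
      qed (auto simp: F_def)
      moreover have "indicator {0..} u * ennreal (gi (v+p-1) u) = 0"
        using False by (cases "u = 0") (auto simp: gi_def indicator_def)
      ultimately show ?thesis by simp
    qed
  qed
  also have "\<dots> = ennreal (A powr (1-p) / (p-1)) * (\<integral>\<^sup>+u. indicator {0..} u * ennreal (gi (v+p-1) u) \<partial>lborel)"
    by (rule nn_integral_cmult) simp
  also have "(\<integral>\<^sup>+u. indicator {0..} u * ennreal (gi (v+p-1) u) \<partial>lborel) = ennreal (Gamma (v+p-1))"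
    using set_integral_to_nn[OF conjunct1[OF gamma_set[of "v+p-1"]]] gamma_set[of "v+p-1"] v p
    by (simp add: gi_nonneg)
  finally show ?thesis
    using G A p Gamma_real_pos[of "v+p-1"] v
    by (simp add: ennreal_mult'[symmetric] ennreal_mult[symmetric] powr_diff powr_minus field_simps)
qed

lemma key_int:
  assumes v: "v > 0" and A: "A > 0" and p: "p > 1"
  shows "set_integrable lborel {0<..} (\<lambda>r. TT v A r * r powr (-p))
     \<and> (LBINT r:{0<..}. TT v A r * r powr (-p)) = Gamma (v+p-1) / (Gamma v * (p-1) * A powr (p-1))"
  by (rule nn_to_set_integral[OF _ _ _ _ key_nn[OF assms]])
     (use assms Gamma_real_pos[of v] Gamma_real_pos[of "v+p-1"] in \<open>auto intro!: mult_nonneg_nonneg TT_nonneg\<close>)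

lemma taylor_exp_neg:
  fixes x :: real assumes "x \<ge> 0"
  shows "\<bar>exp (-x) - (\<Sum>k\<le>n. (1 / fact k) * (-x) ^ k)\<bar> \<le> x ^ (n+1) / fact (n+1)"
proof (cases "x = 0")
  case True
  have "(\<Sum>k\<le>n. (1 / fact k) * (-x) ^ k) = (\<Sum>k\<in>{0}. (1 / fact k) * (-x) ^ k :: real)"
    using True by (intro sum.mono_neutral_right) auto
  thus ?thesis using True by simp
next
  case False
  hence h: "-x < 0" using assms by simp
  obtain t where t: "-x < t" "t < 0"
    "exp (-x) = (\<Sum>m<Suc n. exp 0 / fact m * (-x) ^ m) + exp t / fact (Suc n) * (-x) ^ Suc n"
    using Maclaurin_minus[OF h, of "Suc n" "\<lambda>_. exp" exp] by (auto intro: DERIV_exp)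
  have s: "(\<Sum>m<Suc n. exp 0 / fact m * (-x) ^ m) = (\<Sum>k\<le>n. (1 / fact k) * (-x) ^ k)"
    by (simp add: lessThan_Suc_atMost)
  have "\<bar>exp t / fact (Suc n) * (-x) ^ Suc n\<bar> = exp t * x ^ Suc n / fact (Suc n)"
    using assms by (simp add: abs_mult power_abs)
  also have "\<dots> \<le> 1 * x ^ Suc n / fact (Suc n)"
    using t assms by (intro divide_right_mono mult_right_mono) auto
  finally show ?thesis using t(3) s by simp
qed

lemma GS_form:
  fixes z :: real assumes "z > 0" "n \<ge> 1"
  shows "Gamma (z + real n) / fact n = Gamma z * real n powr z / ((z + real n) * Gamma_series z n)"
proof -
  have pz: "pochhammer z n > 0" using pochhammer_pos[OF assms(1)] .
  have zn: "z \<notin> \<int>\<^sub>\<le>\<^sub>0" using assms(1) by (auto elim!: nonpos_Ints_cases)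
  have g: "Gamma (z + real n) = Gamma z * pochhammer z n"
    using pochhammer_Gamma[OF zn, of n] Gamma_real_pos[OF assms(1)] by simp
  have "Gamma_series z n = fact n * real n powr z / (pochhammer z n * (z + real n))"
    unfolding Gamma_series_def pochhammer_Suc[of z n, unfolded Suc_eq_plus1] using assms
    by (simp add: powr_def)
  moreover have "z + real n \<noteq> 0" using assms by simp
  ultimately have e: "(z + real n) * Gamma_series z n = fact n * real n powr z / pochhammer z n"
    by simp
  have F: "fact n > (0::real)" by simp
  have N: "real n powr z > 0" using assms by simp
  have "Gamma z * real n powr z / ((z + real n) * Gamma_series z n)
      = Gamma z * real n powr z / (fact n * real n powr z / pochhammer z n)" unfolding e ..
  also have "\<dots> = Gamma z * pochhammer z n / fact n" using F N pz by (simp add: field_simps)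
  finally show ?thesis using g by simp
qed

lemma GS_bounds:
  fixes z :: real assumes "z > 0"
  shows "eventually (\<lambda>n. Gamma z / 2 \<le> Gamma_series z n \<and> Gamma_series z n \<le> 2 * Gamma z) sequentially"
proof -
  have G: "Gamma z > 0" using Gamma_real_pos[OF assms] .
  have L: "Gamma_series z \<longlonglongrightarrow> Gamma z" by (rule Gamma_series_LIMSEQ)
  have "eventually (\<lambda>n. Gamma z / 2 < Gamma_series z n) sequentially"
    using order_tendstoD(1)[OF L, of "Gamma z / 2"] G by simp
  moreover have "eventually (\<lambda>n. Gamma_series z n < 2 * Gamma z) sequentially"
    using order_tendstoD(2)[OF L, of "2 * Gamma z"] G by simp
  ultimately show ?thesis by eventually_elim auto
qed

lemma M_upper:
  fixes z q :: real assumes z: "z > 0" and q: "q > 0"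
  shows "eventually (\<lambda>n. q^(n+1) * Gamma (z + real (n+1)) / (fact (n+1) * (real (n+1) + 1/2))
           \<le> (4 * q * 2 powr z) * (real n powr (z-2) * q^n)) sequentially"
proof -
  have G: "Gamma z > 0" using Gamma_real_pos[OF z] .
  have ev: "eventually (\<lambda>n. Gamma z / 2 \<le> Gamma_series z (n+1)) sequentially"
    using GS_bounds[OF z, THEN eventually_sequentially_Suc[THEN iffD2]] by (auto elim: eventually_mono)
  show ?thesis using ev eventually_ge_at_top[of "1::nat"]
  proof eventually_elim
    case (elim n)
    define m where "m = real (n+1)"
    define S where "S = Gamma_series z (n+1)"
    have n1: "real n \<ge> 1" using elim by simp
    have m: "m \<ge> 1" "m \<le> 2 * real n" using n1 by (auto simp: m_def)
    have S: "S \<ge> Gamma z / 2" using elim by (simp add: S_def)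
    have Spos: "S > 0" using S G by linarith
    have "q^(n+1) * Gamma (z + m) / (fact (n+1) * (m + 1/2))
        = q^(n+1) * (Gamma z * m powr z / ((z + m) * S)) / (m + 1/2)"
    proof -
      have "q^(n+1) * Gamma (z + m) / (fact (n+1) * (m + 1/2)) = q^(n+1) * (Gamma (z + m) / fact (n+1)) / (m + 1/2)"
        by simp
      also have "Gamma (z + m) / fact (n+1) = Gamma z * m powr z / ((z + m) * S)"
        using GS_form[OF z, of "n+1"] unfolding m_def S_def by simp
      finally show ?thesis .
    qed
    also have "\<dots> \<le> q^(n+1) * (Gamma z * m powr z / (real n * (Gamma z / 2))) / real n"
    proof -
      have "Gamma z * m powr z / ((z + m) * S) \<le> Gamma z * m powr z / (real n * (Gamma z / 2))"
      proof -
        have zm: "real n \<le> z + m" using z unfolding m_def by simp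
        have a: "real n * (Gamma z / 2) \<le> (z + m) * S"
          by (rule mult_mono) (use zm S Spos z n1 in auto)
        have b: "0 < real n * (Gamma z / 2)" using n1 G by simp
        have c: "0 \<le> Gamma z * m powr z" using G by simp
        show ?thesis by (rule divide_left_mono[OF a c]) (use b Spos z m in simp)
      qed
      note X = this
      have Y: "0 \<le> Gamma z * m powr z / (real n * (Gamma z / 2))" using G n1 by simp
      have qp: "0 \<le> q^(n+1)" using q by simp
      show ?thesis
        by (rule frac_le[OF mult_nonneg_nonneg[OF qp Y] mult_left_mono[OF X qp]]) (use n1 m m_def in auto)
    qed
    also have "\<dots> = 2 * q * q^n * m powr z / (real n * real n)"
      using G n1 by (simp add: field_simps)
    also have "\<dots> \<le> 2 * q * q^n * ((2 * real n) powr z) / (real n * real n)"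
      using m q z n1 by (intro divide_right_mono mult_left_mono powr_mono2) auto
    also have "\<dots> = (2 * q * 2 powr z) * (real n powr (z-2) * q^n)"
      using n1 by (simp add: powr_mult powr_diff field_simps power2_eq_square)
    also have "\<dots> \<le> (4 * q * 2 powr z) * (real n powr (z-2) * q^n)"
      using q by (intro mult_right_mono) auto
    finally show ?case unfolding m_def by simp
  qed
qed

lemma M_lower:
  fixes z q :: real assumes z: "z > 0" and q: "q > 0"
  shows "eventually (\<lambda>n. q^n * Gamma (z + real n) / (fact n * (real n + 1/2))
           \<ge> (1 / (8 * (z + 1))) * (real n powr (z-2) * q^n)) sequentially"
  using GS_bounds[OF z] eventually_ge_at_top[of "1::nat"]
proof eventually_elim
  case (elim n)
  have G: "Gamma z > 0" using Gamma_real_pos[OF z] .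
  define S where "S = Gamma_series z n"
  have n1: "real n \<ge> 1" using elim by simp
  have S: "S \<le> 2 * Gamma z" "S > 0" using elim G by (auto simp: S_def)
  have "(1 / (8 * (z + 1))) * (real n powr (z-2) * q^n) = q^n * real n powr z / (8 * (z+1) * (real n * real n))"
    using n1 z by (simp add: powr_diff field_simps power2_eq_square)
  also have "\<dots> \<le> q^n * (Gamma z * real n powr z / ((z + real n) * S)) / (real n + 1/2)"
  proof -
    have "(z + real n) * S * (real n + 1/2) \<le> ((z+1) * real n) * (2 * Gamma z) * (2 * real n)"
      using n1 z S G by (intro mult_mono) (auto simp: algebra_simps)
    hence "q^n * real n powr z / (8 * (z+1) * (real n * real n)) * ((z + real n) * S * (real n + 1/2))
         \<le> q^n * real n powr z / (8 * (z+1) * (real n * real n)) * (((z+1) * real n) * (2 * Gamma z) * (2 * real n))"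
      using q z n1 by (intro mult_left_mono) auto
    also have "\<dots> = q^n * real n powr z * Gamma z / 2"
    proof -
      have e: "((z+1) * real n) * (2 * Gamma z) * (2 * real n) = (8*(z+1)*(real n*real n)) * (Gamma z / 2)"
        by (simp add: algebra_simps)
      have "8*(z+1)*(real n*real n) \<noteq> 0" using n1 z by simp
      thus ?thesis unfolding e by simp
    qed
    also have "\<dots> \<le> q^n * real n powr z * Gamma z" using q G by simp
    finally have le: "q^n * real n powr z / (8 * (z+1) * (real n * real n)) * ((z + real n) * S * (real n + 1/2)) \<le> q^n * real n powr z * Gamma z" .
    have D: "(z + real n) * S * (real n + 1/2) > 0" using S z n1 by simp
    have "q^n * (Gamma z * real n powr z / ((z + real n) * S)) / (real n + 1/2)
        = q^n * (Gamma z * real n powr z) / ((z + real n) * S * (real n + 1/2))" by simp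
    moreover have "q^n * real n powr z / (8 * (z+1) * (real n * real n)) \<le> q^n * (Gamma z * real n powr z) / ((z + real n) * S * (real n + 1/2))"
      by (subst pos_le_divide_eq[OF D]) (use le in \<open>simp add: mult_ac\<close>)
    ultimately show ?thesis by simp
  qed
  also have "\<dots> = q^n * Gamma (z + real n) / (fact n * (real n + 1/2))"
  proof -
    have "q^n * Gamma (z + real n) / (fact n * (real n + 1/2)) = q^n * (Gamma (z + real n) / fact n) / (real n + 1/2)"
      by simp
    also have "\<dots> = q^n * (Gamma z * real n powr z / ((z + real n) * S)) / (real n + 1/2)"
      using GS_form[OF z elim(2)] unfolding S_def by simp
    finally show ?thesis by simp
  qed
  finally show ?case .
qed

lemma set_int_sum:
  fixes f :: "'i \<Rightarrow> real \<Rightarrow> real"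
  assumes "finite I" "\<And>i. i \<in> I \<Longrightarrow> set_integrable lborel S (f i)"
  shows "set_integrable lborel S (\<lambda>x. \<Sum>i\<in>I. a i * f i x)
    \<and> (LBINT x:S. (\<Sum>i\<in>I. a i * f i x)) = (\<Sum>i\<in>I. a i * (LBINT x:S. f i x))"
  using assms
proof (induction I rule: finite_induct)
  case empty
  show ?case by (simp add: set_integrable_def set_lebesgue_integral_def)
next
  case (insert j I)
  have ij: "set_integrable lborel S (\<lambda>x. a j * f j x)" using insert.prems by auto
  have iI: "set_integrable lborel S (\<lambda>x. \<Sum>i\<in>I. a i * f i x)"
   and eI: "(LBINT x:S. (\<Sum>i\<in>I. a i * f i x)) = (\<Sum>i\<in>I. a i * (LBINT x:S. f i x))"
    using insert.IH insert.prems by auto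
  show ?case using insert.hyps set_integral_add[OF ij iI] eI
    by (simp add: set_integral_mult_right)
qed

lemma powr_split:
  fixes r :: real assumes "r > 0"
  shows "r powr (-(real k + 3/2)) = 1 / (r^k * r powr (3/2))"
proof -
  have "r powr (-(real k + 3/2)) = inverse (r powr (real k + 3/2))" by (rule powr_minus)
  also have "r powr (real k + 3/2) = r powr (real k) * r powr (3/2)" by (rule powr_add)
  also have "r powr (real k) = r ^ k" using assms by (rule powr_realpow)
  finally show ?thesis by (simp add: inverse_eq_divide)
qed

lemma abs_bound_int:
  fixes f g :: "real \<Rightarrow> real"
  assumes "set_integrable lborel S f" "set_integrable lborel S g" "\<And>x. x \<in> S \<Longrightarrow> \<bar>f x\<bar> \<le> g x"
  shows "\<bar>LBINT x:S. f x\<bar> \<le> (LBINT x:S. g x)"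
proof -
  have "(LBINT x:S. f x) \<le> (LBINT x:S. g x)"
    using assms by (intro set_integral_mono) (auto simp: abs_le_iff)
  moreover have "set_integrable lborel S (\<lambda>x. - f x)"
    using set_integrable_mult_right[OF assms(1), of "-1"] by simp
  moreover have "(LBINT x:S. - f x) \<le> (LBINT x:S. g x)"
    using assms calculation by (intro set_integral_mono) (auto simp: abs_le_iff)
  moreover have "(LBINT x:S. - f x) = - (LBINT x:S. f x)"
    by (rule set_integral_uminus[OF assms(1)])
  ultimately show ?thesis by linarith
qed

lemma sint_cong:
  fixes f g :: "real \<Rightarrow> real"
  assumes "\<And>x. x \<in> S \<Longrightarrow> f x = g x"
  shows "(LBINT x:S. f x) = (LBINT x:S. g x)"
  unfolding set_lebesgue_integral_def
  by (intro Bochner_Integration.integral_cong refl) (auto simp: indicator_def assms)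

lemma sintegrable_cong:
  fixes f g :: "real \<Rightarrow> real"
  assumes "\<And>x. x \<in> S \<Longrightarrow> f x = g x" "set_integrable lborel S g"
  shows "set_integrable lborel S f"
proof -
  have "(\<lambda>x. indicator S x *\<^sub>R f x) = (\<lambda>x. indicator S x *\<^sub>R g x)"
    by (auto simp: indicator_def assms(1))
  thus ?thesis using assms(2) unfolding set_integrable_def by simp
qed

theorem theorem2p5:
  fixes x0 y0 \<nu> \<beta> q :: real
  assumes "x0 > 0" and "y0 > 0" and "\<nu> > 0" and "0 \<le> \<beta>" and "\<beta> < 1"
    and q_def: "q = y0\<^sup>2 * (1 - \<beta>)\<^sup>2 / (\<nu>\<^sup>2 * x0 powr (2 * (1 - \<beta>)))"
  shows "((q > 1 \<or> (q = 1 \<and> 2/3 \<le> \<beta>)) \<longrightarrow> \<not> convergent (\<lambda>n. P_inf_n x0 y0 \<nu> \<beta> n))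
     \<and> ((q < 1 \<or> (q = 1 \<and> \<beta> < 2/3)) \<longrightarrow>
           (\<lambda>n. P_inf x0 y0 \<nu> \<beta> - P_inf_n x0 y0 \<nu> \<beta> n)
             \<in> O(\<lambda>n. real n powr (-1 + \<beta> / (2 - 2 * \<beta>)) * exp (- real n * ln (1 / q))))"
proof -
  define v where "v = 1/(2*(1-\<beta>))"
  define A where "A = x0 powr (2*(1-\<beta>)) / (2*(1-\<beta>)^2)"
  define c where "c = y0^2/(2*\<nu>^2)"
  define K where "K = y0/(\<nu> * sqrt(2*pi))"
  define z where "z = v + 1/2"
  define J where "J = (\<lambda>k::nat. Gamma (v + (real k + 3/2) - 1) / (Gamma v * ((real k + 3/2) - 1) * A powr ((real k + 3/2) - 1)))"
  define h where "h = (\<lambda>(k::nat) r. TT v A r * r powr (-(real k + 3/2)))"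
  have b1: "1 - \<beta> > 0" using assms by simp
  have v: "v > 0" using b1 unfolding v_def by simp
  have A: "A > 0" using assms b1 unfolding A_def by simp
  have c: "c > 0" unfolding c_def using assms by simp
  have K: "K > 0" unfolding K_def using assms by simp
  have z: "z > 0" using v unfolding z_def by simp
  have qcA: "q = c / A" unfolding q_def c_def A_def using assms b1 by (simp add: field_simps)
  have qpos: "q > 0" using qcA c A by simp
  have tail: "\<And>r. sabr_tail x0 \<beta> r = TT v A r"
    unfolding sabr_tail_def TT_def v_def A_def by (simp add: mult_ac)
  have hint: "\<And>k. set_integrable lborel {0<..} (h k) \<and> (LBINT r:{0<..}. h k r) = J k"
  proof -
    fix k :: nat
    have "real k + 3/2 > 1" by simp
    from key_int[OF v A this] show "set_integrable lborel {0<..} (h k) \<and> (LBINT r:{0<..}. h k r) = J k"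
      unfolding h_def J_def by simp
  qed
  have hnn: "\<And>k r. r > 0 \<Longrightarrow> h k r \<ge> 0" using TT_nonneg v A unfolding h_def by simp
  have hk: "\<And>k r. r > 0 \<Longrightarrow> h k r = h 0 r / r^k"
    unfolding h_def using powr_split[of _ 0] powr_split by simp
  have hm[measurable]: "\<And>k. h k \<in> borel_measurable lborel" unfolding h_def by measurable
  define t where "t = (\<lambda>k::nat. K * (-c)^k / fact k * J k)"
  define Fn where "Fn = (\<lambda>n r. \<Sum>k\<le>n. (K*(-c)^k/fact k) * h k r)"
  have Fn: "\<And>n. set_integrable lborel {0<..} (Fn n) \<and> (LBINT r:{0<..}. Fn n r) = (\<Sum>k\<le>n. t k)"
  proof -
    fix n
    have "set_integrable lborel {0<..} (\<lambda>x. \<Sum>i\<le>n. (K*(-c)^i/fact i) * h i x) \<and>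
      (LBINT x:{0<..}. \<Sum>i\<le>n. (K*(-c)^i/fact i) * h i x) = (\<Sum>i\<le>n. (K*(-c)^i/fact i) * J i)"
      using set_int_sum[of "{..n}" "{0<..}" h "\<lambda>i. K*(-c)^i/fact i"] hint by simp
    thus "set_integrable lborel {0<..} (Fn n) \<and> (LBINT r:{0<..}. Fn n r) = (\<Sum>k\<le>n. t k)"
      unfolding Fn_def t_def by (simp add: mult_ac)
  qed
  have Fn_alt: "\<And>n r. r > 0 \<Longrightarrow> Fn n r = K * h 0 r * (\<Sum>k\<le>n. (1 / fact k) * (-(c/r))^k)"
    unfolding Fn_def sum_distrib_left
  proof (intro sum.cong refl)
    fix n k and r :: real assume r: "r > 0"
    show "K * (- c) ^ k / fact k * h k r = K * h 0 r * (1 / fact k * (- (c / r)) ^ k)"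
    proof -
      have m: "-(c/r) = (-c)/r" by simp
      have pw: "(-(c/r))^k = (-c)^k / r^k" unfolding m by (rule power_divide)
      show ?thesis unfolding pw hk[OF r, of k] using r by (simp add: field_simps)
    qed
  qed
  have Pn: "\<And>n. P_inf_n x0 y0 \<nu> \<beta> n = (\<Sum>k\<le>n. t k)"
  proof -
    fix n
    have "P_inf_n x0 y0 \<nu> \<beta> n = (LBINT r:{0<..}. Fn n r)"
      unfolding P_inf_n_def
    proof (rule sint_cong)
      fix r :: real assume "r \<in> {0<..}" hence r: "r > 0" by simp
      have e: "- (y0\<^sup>2 / (2 * \<nu>\<^sup>2 * r)) = -(c/r)" unfolding c_def by simp
      have "h 0 r = TT v A r / r powr (3/2)" unfolding h_def using r by (simp add: powr_minus inverse_eq_divide)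
      thus "sabr_tail x0 \<beta> r * (y0 / (\<nu> * r powr (3 / 2) * sqrt (2 * pi))) *
          (\<Sum>k\<le>n. 1 / fact k * (- (y0\<^sup>2 / (2 * \<nu>\<^sup>2 * r))) ^ k) = Fn n r"
        unfolding Fn_alt[OF r] e tail K_def by (simp add: mult_ac)
    qed
    thus "P_inf_n x0 y0 \<nu> \<beta> n = (\<Sum>k\<le>n. t k)" using Fn by simp
  qed
  define D where "D = K / (Gamma v * A powr (1/2))"
  have D: "D > 0" unfolding D_def using K v A Gamma_real_pos[OF v] by simp
  have tM: "\<And>k. \<bar>t k\<bar> = D * (q^k * Gamma (z + real k) / (fact k * (real k + 1/2)))"
  proof -
    fix k :: nat
    have e1: "v + (real k + 3/2) - 1 = z + real k" unfolding z_def by simp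
    have e2: "A powr (real k + 3/2 - 1) = A^k * A powr (1/2)"
      using A by (simp add: powr_add[symmetric] powr_realpow[symmetric] add.commute)
    have G: "Gamma (z + real k) > 0" using Gamma_real_pos[of "z + real k"] z by simp
    have Gv: "Gamma v > 0" using Gamma_real_pos[OF v] .
    have "\<bar>t k\<bar> = K * c^k / fact k * J k"
      unfolding t_def J_def e1 using K c G Gv A by (simp add: abs_mult power_abs)
    also have "\<dots> = D * (q^k * Gamma (z + real k) / (fact k * (real k + 1/2)))"
      unfolding J_def e1 e2 D_def qcA using A Gv by (simp add: power_divide field_simps)
    finally show "\<bar>t k\<bar> = D * (q^k * Gamma (z + real k) / (fact k * (real k + 1/2)))" .
  qed
  have Gz: "Gamma z > 0" using Gamma_real_pos[OF z] .
  have tdiff: "\<And>n. P_inf_n x0 y0 \<nu> \<beta> (Suc n) - P_inf_n x0 y0 \<nu> \<beta> n = t (Suc n)"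
    unfolding Pn by simp
  have part1: "(q > 1 \<or> (q = 1 \<and> 2/3 \<le> \<beta>)) \<longrightarrow> \<not> convergent (\<lambda>n. P_inf_n x0 y0 \<nu> \<beta> n)"
  proof (intro impI notI)
    assume hyp: "q > 1 \<or> (q = 1 \<and> 2/3 \<le> \<beta>)"
    assume "convergent (\<lambda>n. P_inf_n x0 y0 \<nu> \<beta> n)"
    then obtain L where L: "(\<lambda>n. P_inf_n x0 y0 \<nu> \<beta> n) \<longlonglongrightarrow> L" by (auto simp: convergent_def)
    have "(\<lambda>n. P_inf_n x0 y0 \<nu> \<beta> (Suc n) - P_inf_n x0 y0 \<nu> \<beta> n) \<longlonglongrightarrow> L - L"
      by (intro tendsto_diff L filterlim_compose[OF L filterlim_Suc])
    hence "(\<lambda>n. t (Suc n)) \<longlonglongrightarrow> 0" unfolding tdiff by simp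
    hence "t \<longlonglongrightarrow> 0" by (rule filterlim_sequentially_Suc[THEN iffD1])
    hence "(\<lambda>n. \<bar>t n\<bar>) \<longlonglongrightarrow> 0" by (rule tendsto_rabs_zero)
    define \<epsilon> where "\<epsilon> = D * (1 / (8 * (z + 1)))"
    have eps: "\<epsilon> > 0" unfolding \<epsilon>_def using D z by simp
    have ev1: "eventually (\<lambda>n. \<bar>t n\<bar> < \<epsilon>) sequentially"
      using order_tendstoD(2)[OF \<open>(\<lambda>n. \<bar>t n\<bar>) \<longlonglongrightarrow> 0\<close> eps] .
    have ev2: "eventually (\<lambda>n. real n powr (z-2) * q^n \<ge> 1) sequentially"
    proof (cases "q > 1")
      case True
      have "filterlim (\<lambda>n::nat. real n powr (-2) * q ^ n) at_top at_top"
        using True by real_asymp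
      hence "eventually (\<lambda>n. real n powr (-2) * q ^ n \<ge> 1) sequentially"
        by (simp add: filterlim_at_top)
      thus ?thesis using eventually_ge_at_top[of "1::nat"]
      proof eventually_elim
        case (elim n)
        have "real n powr (-2) \<le> real n powr (z-2)" using elim z by (intro powr_mono) auto
        hence "real n powr (-2) * q ^ n \<le> real n powr (z-2) * q ^ n"
          using qpos by (intro mult_right_mono) auto
        thus ?case using elim by linarith
      qed
    next
      case False
      hence q1: "q = 1" "2/3 \<le> \<beta>" using hyp by auto
      have "z - 2 \<ge> 0" unfolding z_def v_def using q1 b1 by (simp add: field_simps)
      show ?thesis using eventually_ge_at_top[of "1::nat"]
        by eventually_elim (use q1 \<open>z - 2 \<ge> 0\<close> in \<open>auto intro: ge_one_powr_ge_zero\<close>)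
    qed
    have "eventually (\<lambda>n. False) sequentially"
      using ev1 ev2 M_lower[OF z qpos]
    proof eventually_elim
      case (elim n)
      have "\<epsilon> \<le> \<epsilon> * (real n powr (z-2) * q^n)" using elim eps by simp
      also have "\<dots> = D * ((1 / (8 * (z + 1))) * (real n powr (z-2) * q^n))" unfolding \<epsilon>_def by simp
      also have "\<dots> \<le> D * (q^n * Gamma (z + real n) / (fact n * (real n + 1/2)))"
        using elim D by (intro mult_left_mono) auto
      also have "\<dots> = \<bar>t n\<bar>" using tM by simp
      finally show ?case using elim by simp
    qed
    thus False by simp
  qed
  have Pinf: "P_inf x0 y0 \<nu> \<beta> = K * (LBINT r:{0<..}. h 0 r * exp (-(c/r)))"
  proof -
    have "(LBINT r:{0<..}. sabr_tail x0 \<beta> r * r powr (-3/2) * exp (- (y0\<^sup>2 / (2 * \<nu>\<^sup>2 * r))))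
        = (LBINT r:{0<..}. h 0 r * exp (-(c/r)))"
      by (rule sint_cong) (simp add: tail h_def c_def)
    thus ?thesis unfolding P_inf_def K_def by simp
  qed
  have intE: "set_integrable lborel {0<..} (\<lambda>r. h 0 r * exp (-(c/r)))"
  proof (rule set_integrable_bound[OF conjunct1[OF hint[of 0]]])
    show "set_borel_measurable lborel {0<..} (\<lambda>r. h 0 r * exp (-(c/r)))"
      unfolding set_borel_measurable_def by measurable
    show "AE x in lborel. x \<in> {0<..} \<longrightarrow> norm (h 0 x * exp (-(c/x))) \<le> norm (h 0 x)"
    proof (intro AE_I2 impI)
      fix x :: real assume "x \<in> {0<..}"
      hence x: "x > 0" by simp
      have "exp (-(c/x)) \<le> 1" using c x by simp
      thus "norm (h 0 x * exp (-(c/x))) \<le> norm (h 0 x)"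
        using hnn[OF x, of 0] by (simp add: abs_mult mult_left_le)
    qed
  qed
  have bnd: "\<And>n. \<bar>P_inf x0 y0 \<nu> \<beta> - P_inf_n x0 y0 \<nu> \<beta> n\<bar> \<le> \<bar>t (Suc n)\<bar>"
  proof -
    fix n
    have i1: "set_integrable lborel {0<..} (\<lambda>r. K * (h 0 r * exp (-(c/r))))"
      using intE by simp
    have "P_inf x0 y0 \<nu> \<beta> - P_inf_n x0 y0 \<nu> \<beta> n = (LBINT r:{0<..}. K * (h 0 r * exp (-(c/r))) - Fn n r)"
      unfolding Pinf Pn using set_integral_diff(2)[OF i1 conjunct1[OF Fn[of n]]] Fn[of n] intE
      by (simp add: set_integral_mult_right)
    also have "\<bar>\<dots>\<bar> \<le> (LBINT r:{0<..}. (K * c^(Suc n) / fact (Suc n)) * h (Suc n) r)"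
    proof (rule abs_bound_int)
      show "set_integrable lborel {0<..} (\<lambda>r. K * (h 0 r * exp (-(c/r))) - Fn n r)"
        using set_integral_diff(1)[OF i1 conjunct1[OF Fn[of n]]] .
      show "set_integrable lborel {0<..} (\<lambda>r. (K * c^(Suc n) / fact (Suc n)) * h (Suc n) r)"
        using conjunct1[OF hint[of "Suc n"]] by simp
      fix r :: real assume "r \<in> {0<..}"
      hence r: "r > 0" by simp
      have "\<bar>K * (h 0 r * exp (-(c/r))) - Fn n r\<bar>
          = K * h 0 r * \<bar>exp (-(c/r)) - (\<Sum>k\<le>n. (1 / fact k) * (-(c/r))^k)\<bar>"
      proof -
        have "K * (h 0 r * exp (-(c/r))) - Fn n r = (K * h 0 r) * (exp (-(c/r)) - (\<Sum>k\<le>n. (1 / fact k) * (-(c/r))^k))"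
          unfolding Fn_alt[OF r] by (simp add: algebra_simps)
        thus ?thesis using K hnn[OF r, of 0] by (simp add: abs_mult)
      qed
      also have "\<dots> \<le> K * h 0 r * ((c/r)^(n+1) / fact (n+1))"
        using taylor_exp_neg[of "c/r" n] c r K hnn[OF r, of 0] by (intro mult_left_mono) auto
      also have "\<dots> = (K * c^(Suc n) / fact (Suc n)) * h (Suc n) r"
        using hk[OF r, of "Suc n"] r by (simp add: power_divide mult_ac)
      finally show "\<bar>K * (h 0 r * exp (-(c/r))) - Fn n r\<bar> \<le> (K * c^(Suc n) / fact (Suc n)) * h (Suc n) r" .
    qed
    also have "\<dots> = (K * c^(Suc n) / fact (Suc n)) * J (Suc n)"
      using hint[of "Suc n"] by (simp add: set_integral_mult_right)
    also have "\<dots> = \<bar>t (Suc n)\<bar>"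
    proof -
      have "J (Suc n) > 0" unfolding J_def using v A Gamma_real_pos[OF v] Gamma_real_pos[of "v + (real (Suc n) + 3/2) - 1"]
        by simp
      thus ?thesis unfolding t_def using K c by (simp add: abs_mult power_abs)
    qed
    finally show "\<bar>P_inf x0 y0 \<nu> \<beta> - P_inf_n x0 y0 \<nu> \<beta> n\<bar> \<le> \<bar>t (Suc n)\<bar>" .
  qed
  have expo: "-1 + \<beta> / (2 - 2 * \<beta>) = z - 2"
    unfolding z_def v_def using b1 by (simp add: field_simps)
  have qn: "\<And>n. exp (- real n * ln (1 / q)) = q^n"
  proof -
    fix n
    have "exp (- real n * ln (1 / q)) = exp (real n * ln q)" using qpos by (simp add: ln_div)
    also have "\<dots> = exp (ln q) ^ n" by (rule exp_of_nat_mult)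
    finally show "exp (- real n * ln (1 / q)) = q^n" using qpos by simp
  qed
  have part2: "(\<lambda>n. P_inf x0 y0 \<nu> \<beta> - P_inf_n x0 y0 \<nu> \<beta> n)
             \<in> O(\<lambda>n. real n powr (-1 + \<beta> / (2 - 2 * \<beta>)) * exp (- real n * ln (1 / q)))"
    unfolding expo qn
  proof (rule bigoI)
    show "eventually (\<lambda>n. norm (P_inf x0 y0 \<nu> \<beta> - P_inf_n x0 y0 \<nu> \<beta> n)
            \<le> (D * (4 * q * 2 powr z)) * norm (real n powr (z - 2) * q ^ n)) sequentially"
      using M_upper[OF z qpos]
    proof eventually_elim
      case (elim n)
      have "norm (P_inf x0 y0 \<nu> \<beta> - P_inf_n x0 y0 \<nu> \<beta> n) \<le> \<bar>t (Suc n)\<bar>" using bnd by simp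
      also have "\<dots> = D * (q ^ (n + 1) * Gamma (z + real (n + 1)) / (fact (n + 1) * (real (n + 1) + 1 / 2)))"
        using tM[of "Suc n"] by simp
      also have "\<dots> \<le> D * ((4 * q * 2 powr z) * (real n powr (z - 2) * q ^ n))"
        using elim D by (intro mult_left_mono) auto
      also have "\<dots> = (D * (4 * q * 2 powr z)) * norm (real n powr (z - 2) * q ^ n)"
        using qpos by (simp add: abs_mult)
      finally show ?case .
    qed
  qed
  show ?thesis using part1 part2 by blast
qed

end
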